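(* If $u,v\in\mathbb{P}^*$ both have increasing/decreasing factorizations, then $u\backsim v$ if and only if $u$ is a rearrangement of $v$.
   Context: $\mathbb{P}^*$ is the set of finite words over the positive integers $\mathbb{P}$ (usual order). For $w=w_1\ldots w_n$, $\mathrm{wt}(w)=t^{n}x^{\sum_i w_i}$. For words $u,w$, $u\le w$ (generalized factor order) if there are $|u|$ consecutive letters of $w$ whose $i$-th letter is $\ge$ the $i$-th letter of $u$ for each $i$. $\mathcal{F}(u)=\{w\in\mathbb{P}^*:u\le w\}$ and $F(u;t,x)=\sum_{w\in\mathcal{F}(u)}\mathrm{wt}(w)$. Two words are Wilf equivalent, $u\backsim v$, iff $F(u;t,x)=F(v;t,x)$. A word $u=u_1\ldots u_n$ has an increasing/decreasing factorization if $u_1\le\cdots\le u_n$ or there is $k<n$ with $u_1\le\cdots\le u_k>u_{k+1}\ge\cdots\ge u_n$. A rearrangement of $u$ is a word obtained by permuting its letters. *)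

theory Defs
  imports Main "HOL-Computational_Algebra.Formal_Power_Series"
begin

definition pword :: "nat list \<Rightarrow> bool" where
  "pword w \<longleftrightarrow> (\<forall>a\<in>set w. 0 < a)"

definition gfo :: "nat list \<Rightarrow> nat list \<Rightarrow> bool" where
  "gfo u w \<longleftrightarrow> (\<exists>i. i + length u \<le> length w \<and> (\<forall>j<length u. u ! j \<le> w ! (i + j)))"

text \<open>F(u;t,x) = sum over w in F(u) of t^|w| x^(sum of letters), as a bivariate formal power
  series: outer variable t, inner variable x.\<close>
definition F :: "nat list \<Rightarrow> int fps fps" where
  "F u = Abs_fps (\<lambda>n. Abs_fps (\<lambda>m.
      int (card {w. pword w \<and> gfo u w \<and> length w = n \<and> sum_list w = m})))"

definition wilf_equiv :: "nat list \<Rightarrow> nat list \<Rightarrow> bool" where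
  "wilf_equiv u v \<longleftrightarrow> F u = F v"

text \<open>Increasing/decreasing factorization (1-indexed k in the paper, 1 \<le> k < n).\<close>
definition inc_dec :: "nat list \<Rightarrow> bool" where
  "inc_dec u \<longleftrightarrow> sorted u \<or>
     (\<exists>k. 0 < k \<and> k < length u \<and> sorted (take k u) \<and> u ! (k - 1) > u ! k
          \<and> sorted_wrt (\<ge>) (drop k u))"

definition rearrangement :: "nat list \<Rightarrow> nat list \<Rightarrow> bool" where
  "rearrangement u v \<longleftrightarrow> mset u = mset v"

end

theory Submission
  imports Defs
begin



definition G :: "nat set \<Rightarrow> nat \<Rightarrow> nat" where
  "G T c = card (\<Union>i\<in>T. {i..<i+c})"

lemma G_single: "G {t} c = c" by (simp add: G_def)

lemma G_insert:
  assumes "finite T" "T \<noteq> {}" "\<forall>x\<in>T. x < t"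
  shows "G (insert t T) c = G T c + min (t - Max T) c"
proof -
  define s where "s = Max T"
  define U where "U = (\<Union>i\<in>T. {i..<i+c})"
  have sT: "s \<in> T" using assms s_def by simp
  have st: "s < t" using assms sT by auto
  have Ub: "\<forall>k\<in>U. k < s + c" using assms unfolding U_def s_def
    by (auto, metis Max_ge add_le_mono1 le_less_trans not_le)
  have Us: "{s..<s+c} \<subseteq> U" using sT unfolding U_def by auto
  have eq: "(\<Union>i\<in>insert t T. {i..<i+c}) = U \<union> {max t (s+c)..<t+c}"
  proof -
    have "{t..<t+c} \<subseteq> U \<union> {max t (s+c)..<t+c}"
    proof
      fix k assume k: "k \<in> {t..<t+c}"
      show "k \<in> U \<union> {max t (s+c)..<t+c}"
      proof (cases "k < s + c")
        case True then have "k \<in> {s..<s+c}" using k st by auto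
        then show ?thesis using Us by auto
      qed (use k in auto)
    qed
    then show ?thesis unfolding U_def by auto
  qed
  have disj: "U \<inter> {max t (s+c)..<t+c} = {}" using Ub by auto
  have "card (U \<union> {max t (s+c)..<t+c}) = card U + card {max t (s+c)..<t+c}"
    by (rule card_Un_disjoint) (use disj assms in \<open>auto simp: U_def\<close>)
  moreover have "card {max t (s+c)..<t+c} = min (t - s) c" using st by auto
  ultimately show ?thesis using eq unfolding G_def U_def s_def by simp
qed



lemma convex_interval:
  fixes S :: "nat set"
  assumes "finite S" "\<And>a b c. a \<in> S \<Longrightarrow> c \<in> S \<Longrightarrow> a \<le> b \<Longrightarrow> b \<le> c \<Longrightarrow> b \<in> S"
  shows "\<exists>p. S = {p..<p + card S}"
proof (cases "S = {}")
  case True then show ?thesis by simp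
next
  case False
  have mn: "Min S \<in> S" "Max S \<in> S" using assms False by auto
  have "S = {Min S..Max S}"
  proof
    show "S \<subseteq> {Min S..Max S}" using assms(1) by auto
    show "{Min S..Max S} \<subseteq> S" using assms(2)[OF mn] by auto
  qed
  moreover have "Min S \<le> Max S" using assms(1) False by simp
  ultimately have "S = {Min S..<Min S + card S}"
    by (metis Suc_diff_le add_Suc_right atLeastLessThanSuc_atLeastAtMost card_atLeastAtMost le_add_diff_inverse)
  then show ?thesis by blast
qed

lemma incdec_mid:
  assumes "inc_dec u" "j1 \<le> j2" "j2 \<le> j3" "j3 < length u"
  shows "min (u!j1) (u!j3) \<le> u!j2"
proof -
  from assms(1) consider "sorted u" | k where "0 < k" "k < length u" "sorted (take k u)"
    "sorted_wrt (\<ge>) (drop k u)" unfolding inc_dec_def by blast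
  then show ?thesis
  proof cases
    case 1 
    then have "u!j1 \<le> u!j2" using assms by (intro sorted_nth_mono) auto
    then show ?thesis by linarith
  next
    case 2
    show ?thesis
    proof (cases "j2 < k")
      case True
      have "take k u ! j1 \<le> take k u ! j2"
        using 2 True assms by (intro sorted_nth_mono) auto
      then have "u!j1 \<le> u!j2" using True assms by simp
      then show ?thesis by linarith
    next
      case False
      have "u ! j3 \<le> u ! j2"
      proof (cases "j2 = j3")
        case False
        then have a: "j2 - k < j3 - k" "j3 - k < length (drop k u)" using \<open>\<not> j2 < k\<close> assms by auto
        have H: "\<forall>i j. i < j \<longrightarrow> j < length (drop k u) \<longrightarrow> drop k u ! j \<le> drop k u ! i"
          using 2(4) by (simp only: sorted_wrt_iff_nth_less)
        have "drop k u ! (j3 - k) \<le> drop k u ! (j2 - k)" using H a by blast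
        then show ?thesis using \<open>\<not> j2 < k\<close> assms by simp
      qed simp
      then show ?thesis by linarith
    qed
  qed
qed

definition cnt :: "nat list \<Rightarrow> nat \<Rightarrow> nat" where
  "cnt u l = card {j. j < length u \<and> l \<le> u!j}"

lemma level_interval:
  assumes "inc_dec u"
  shows "\<exists>p. {j. j < length u \<and> l \<le> u!j} = {p..<p + cnt u l}"
  unfolding cnt_def
proof (rule convex_interval)
  fix a b c assume "a \<in> {j. j < length u \<and> l \<le> u!j}" "c \<in> {j. j < length u \<and> l \<le> u!j}" "a \<le> b" "b \<le> c"
  then show "b \<in> {j. j < length u \<and> l \<le> u!j}"
    using incdec_mid[OF assms, of a b c] by auto
qed simp



lemma fin_lists: "finite {z::nat list. length z = L \<and> sum_list z = s}"
proof (rule finite_subset)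
  show "{z::nat list. length z = L \<and> sum_list z = s} \<subseteq> {z. set z \<subseteq> {0..s} \<and> length z = L}"
    using member_le_sum_list by fastforce
  show "finite {z. set z \<subseteq> {0..s} \<and> length z = L}" by (rule finite_lists_length_eq) simp
qed

definition Kt :: "nat \<Rightarrow> nat \<Rightarrow> nat \<Rightarrow> nat" where
  "Kt L m s = (if s \<le> m then card {z::nat list. length z = L \<and> sum_list z = m - s} else 0)"

lemma sum_list_len: "length w = L \<Longrightarrow> sum_list w = (\<Sum>k<L. w!k)"
  by (simp add: sum_list_sum_nth lessThan_atLeast0)

lemma count_above:
  "card {w. length w = L \<and> sum_list w = m \<and> (\<forall>k<L. h k \<le> w!k)} = Kt L m (\<Sum>k<L. h k)"
proof (cases "(\<Sum>k<L. h k) \<le> m")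
  case False
  have "{w. length w = L \<and> sum_list w = m \<and> (\<forall>k<L. h k \<le> w!k)} = {}"
  proof (rule ccontr)
    assume "\<not> ?thesis"
    then obtain w where w: "length w = L" "sum_list w = m" "\<forall>k<L. h k \<le> w!k" by auto
    then have "(\<Sum>k<L. h k) \<le> (\<Sum>k<L. w!k)" by (intro sum_mono) auto
    then show False using w False sum_list_len[OF w(1)] by simp
  qed
  then show ?thesis using False by (metis (no_types, lifting) card.empty Kt_def)
next
  case True
  define H where "H = (\<Sum>k<L. h k)"
  define f where "f z = map (\<lambda>k. z!k + h k) [0..<L]" for z :: "nat list"
  define g where "g w = map (\<lambda>k. w!k - h k) [0..<L]" for w :: "nat list"
  let ?A = "{z::nat list. length z = L \<and> sum_list z = m - H}"
  let ?B = "{w. length w = L \<and> sum_list w = m \<and> (\<forall>k<L. h k \<le> w!k)}"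
  have "bij_betw f ?A ?B"
  proof (rule bij_betw_byWitness[where f'=g])
    show "\<forall>a\<in>?A. g (f a) = a" by (auto simp: f_def g_def intro: nth_equalityI)
    show "\<forall>a\<in>?B. f (g a) = a" by (auto simp: f_def g_def intro: nth_equalityI)
    show "f ` ?A \<subseteq> ?B"
    proof
      fix w assume "w \<in> f ` ?A"
      then obtain z where z: "z \<in> ?A" "w = f z" by auto
      have "sum_list w = (\<Sum>k<L. z!k + h k)" using z by (simp add: f_def sum_list_len)
      also have "\<dots> = (\<Sum>k<L. z!k) + H" by (simp add: sum.distrib H_def)
      also have "\<dots> = m" using z True H_def sum_list_len[of z L] by simp
      finally show "w \<in> ?B" using z by (simp add: f_def)
    qed
    show "g ` ?B \<subseteq> ?A"
    proof
      fix z assume "z \<in> g ` ?B"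
      then obtain w where w: "w \<in> ?B" "z = g w" by auto
      have "(\<Sum>k<L. w!k - h k) + H = (\<Sum>k<L. w!k - h k + h k)" by (simp add: sum.distrib H_def)
      also have "\<dots> = (\<Sum>k<L. w!k)" using w by (intro sum.cong) auto
      also have "\<dots> = m" using w sum_list_len[of w L] by simp
      finally have "(\<Sum>k<L. w!k - h k) = m - H" by simp
      then show "z \<in> ?A" using w by (simp add: g_def sum_list_len)
    qed
  qed
  then show ?thesis using True by (simp add: Kt_def H_def bij_betw_same_card)
qed

lemma Kt_self: "Kt L a a = 1"
proof -
  have "{z::nat list. length z = L \<and> sum_list z = 0} = {replicate L 0}"
    by (auto simp: sum_list_eq_0_iff intro: replicate_eqI)
  then show ?thesis by (simp add: Kt_def)
qed

lemma Kt_inj: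
  assumes "\<And>m. Kt L m a = Kt L m b" shows "a = b"
proof (rule ccontr)
  assume "a \<noteq> b"
  then consider "a < b" | "b < a" by linarith
  then show False
  proof cases
    case 1 then show False using assms[of a] Kt_self[of L a] by (simp add: Kt_def)
  next
    case 2 then show False using assms[of b] Kt_self[of L b] by (simp add: Kt_def)
  qed
qed



definition hh :: "nat list \<Rightarrow> nat set \<Rightarrow> nat \<Rightarrow> nat" where
  "hh u T k = Max (insert 1 ((\<lambda>i. u!(k-i)) ` {i\<in>T. i \<le> k \<and> k < i + length u}))"

definition AA :: "nat list \<Rightarrow> nat \<Rightarrow> nat \<Rightarrow> nat \<Rightarrow> nat list set" where
  "AA u L m i = {w. pword w \<and> length w = L \<and> sum_list w = m \<and> (\<forall>j<length u. u!j \<le> w!(i+j))}"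

lemma hh_le_iff:
  assumes "finite T"
  shows "hh u T k \<le> x \<longleftrightarrow> 1 \<le> x \<and> (\<forall>i\<in>T. i \<le> k \<and> k < i + length u \<longrightarrow> u!(k-i) \<le> x)"
  unfolding hh_def using assms by (subst Max_le_iff) auto

lemma le_hh_iff:
  assumes "finite T"
  shows "l \<le> hh u T k \<longleftrightarrow> l \<le> 1 \<or> (\<exists>i\<in>T. i \<le> k \<and> k < i + length u \<and> l \<le> u!(k-i))"
  unfolding hh_def using assms by (subst Max_ge_iff) auto

lemma pword_nth: "length w = L \<Longrightarrow> pword w \<longleftrightarrow> (\<forall>k<L. 0 < w!k)"
  unfolding pword_def by (auto simp: in_set_conv_nth)

lemma inter_AA:
  assumes "finite T" "T \<noteq> {}" "\<forall>i\<in>T. i + length u \<le> L"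
  shows "(\<Inter>i\<in>T. AA u L m i) = {w. length w = L \<and> sum_list w = m \<and> (\<forall>k<L. hh u T k \<le> w!k)}"
proof (intro set_eqI iffI)
  fix w assume w: "w \<in> (\<Inter>i\<in>T. AA u L m i)"
  obtain i0 where "i0 \<in> T" using assms by auto
  then have w0: "pword w" "length w = L" "sum_list w = m" using w by (auto simp: AA_def)
  have "hh u T k \<le> w!k" if "k < L" for k
    unfolding hh_le_iff[OF assms(1)]
  proof safe
    show "1 \<le> w!k" using w0 that pword_nth[of w L] by auto
    fix i assume "i \<in> T" "i \<le> k" "k < i + length u"
    then have "i \<in> T" "k - i < length u" by auto
    then have "u!(k-i) \<le> w!(i + (k-i))" using w unfolding AA_def by blast
    then show "u!(k-i) \<le> w!k" using \<open>i \<le> k\<close> by simp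
  qed
  then show "w \<in> {w. length w = L \<and> sum_list w = m \<and> (\<forall>k<L. hh u T k \<le> w!k)}" using w0 by simp
next
  fix w assume w: "w \<in> {w. length w = L \<and> sum_list w = m \<and> (\<forall>k<L. hh u T k \<le> w!k)}"
  then have w1: "length w = L" "sum_list w = m" "\<And>k. k < L \<Longrightarrow> hh u T k \<le> w!k" by auto
  have pw: "pword w" using w1 pword_nth[of w L] hh_le_iff[OF assms(1)] by fastforce
  show "w \<in> (\<Inter>i\<in>T. AA u L m i)"
  proof
    fix i assume i: "i \<in> T"
    have "u!j \<le> w!(i+j)" if "j < length u" for j
    proof -
      have "i + j < L" using assms(3) i that by auto
      then have "hh u T (i+j) \<le> w!(i+j)" using w1 by auto
      then show ?thesis using i that hh_le_iff[OF assms(1)] by fastforce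
    qed
    then show "w \<in> AA u L m i" using pw w1 by (auto simp: AA_def)
  qed
qed

lemma sum_levels:
  fixes h :: "nat \<Rightarrow> nat"
  assumes "\<forall>k<L. h k \<le> B"
  shows "(\<Sum>k<L. h k) = (\<Sum>l\<in>{1..B}. card {k. k < L \<and> l \<le> h k})"
proof -
  have "(\<Sum>k<L. h k) = (\<Sum>k<L. \<Sum>l\<in>{1..B}. of_bool (l \<le> h k))"
  proof (rule sum.cong[OF refl])
    fix k assume "k \<in> {..<L}"
    then have "{1..B} \<inter> {l. l \<le> h k} = {1..h k}" using assms by auto
    then show "h k = (\<Sum>l\<in>{1..B}. of_bool (l \<le> h k))" by simp
  qed
  also have "\<dots> = (\<Sum>l\<in>{1..B}. \<Sum>k<L. of_bool (l \<le> h k))" by (rule sum.swap)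
  also have "\<dots> = (\<Sum>l\<in>{1..B}. card {k. k < L \<and> l \<le> h k})"
  proof (rule sum.cong[OF refl])
    fix l
    have "{..<L} \<inter> {k. l \<le> h k} = {k. k < L \<and> l \<le> h k}" by auto
    then show "(\<Sum>k<L. of_bool (l \<le> h k)) = card {k. k < L \<and> l \<le> h k}" by simp
  qed
  finally show ?thesis .
qed




definition Phi :: "nat list \<Rightarrow> nat \<Rightarrow> nat set \<Rightarrow> nat" where
  "Phi u B T = (\<Sum>l\<in>{2..B}. G T (cnt u l))"

lemma level_set:
  assumes "inc_dec u" "finite T" "\<forall>i\<in>T. i + length u \<le> L" "2 \<le> l"
  shows "card {k. k < L \<and> l \<le> hh u T k} = G T (cnt u l)"
proof -
  obtain p where p: "{j. j < length u \<and> l \<le> u!j} = {p..<p + cnt u l}"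
    using level_interval[OF assms(1)] by blast
  let ?c = "cnt u l"
  have eq: "{k. k < L \<and> l \<le> hh u T k} = (\<lambda>x. x + p) ` (\<Union>i\<in>T. {i..<i + ?c})"
  proof (intro set_eqI iffI)
    fix k assume "k \<in> {k. k < L \<and> l \<le> hh u T k}"
    then have "l \<le> hh u T k" by simp
    then have "l \<le> 1 \<or> (\<exists>i\<in>T. i \<le> k \<and> k < i + length u \<and> l \<le> u!(k-i))"
      by (simp only: le_hh_iff[OF assms(2)])
    then obtain i where i: "i \<in> T" "i \<le> k" "k < i + length u" "l \<le> u!(k-i)"
      using assms(4) by auto
    then have "k - i \<in> {j. j < length u \<and> l \<le> u!j}" by auto
    then have j: "p \<le> k - i" "k - i < p + ?c" using p by auto
    have "k = (i + (k - i - p)) + p" using i j by auto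
    moreover have "i + (k - i - p) \<in> {i..<i + ?c}" using i j by auto
    then have "i + (k - i - p) \<in> (\<Union>i\<in>T. {i..<i + ?c})" using i(1) by blast
    ultimately show "k \<in> (\<lambda>x. x + p) ` (\<Union>i\<in>T. {i..<i + ?c})" by blast
  next
    fix k assume "k \<in> (\<lambda>x. x + p) ` (\<Union>i\<in>T. {i..<i + ?c})"
    then obtain x where x: "x \<in> (\<Union>i\<in>T. {i..<i + ?c})" "k = x + p" by blast
    then obtain i where i: "i \<in> T" "x \<in> {i..<i + ?c}" by blast
    then have xi: "k = x + p" "i \<in> T" "i \<le> x" "x < i + ?c" using x by auto
    then have "x - i + p \<in> {p..<p + ?c}" by (simp; arith)
    then have "x - i + p \<in> {j. j < length u \<and> l \<le> u!j}" by (simp only: p)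
    then have j: "x - i + p < length u" "l \<le> u!(x - i + p)" by auto
    have ki: "k - i = x - i + p" "i \<le> k" using xi by auto
    have "i + length u \<le> L" using assms(3) xi(2) by blast
    then have "k < L" using j(1) xi(1,3) by linarith
    moreover have "l \<le> hh u T k"
    proof -
      have "i \<le> k \<and> k < i + length u \<and> l \<le> u!(k-i)" using ki j by simp
      then show ?thesis unfolding le_hh_iff[OF assms(2)] using xi(2) by blast
    qed
    ultimately show "k \<in> {k. k < L \<and> l \<le> hh u T k}" by simp
  qed
  have "inj (\<lambda>x::nat. x + p)" by (simp add: inj_def)
  then have "card ((\<lambda>x. x + p) ` (\<Union>i\<in>T. {i..<i + ?c})) = card (\<Union>i\<in>T. {i..<i + ?c})"
    by (simp add: card_image inj_on_def)
  then show ?thesis using eq by (simp add: G_def)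
qed

lemma wt_formula:
  assumes "inc_dec u" "finite T" "\<forall>i\<in>T. i + length u \<le> L" "\<forall>a\<in>set u. a \<le> B" "1 \<le> B"
  shows "(\<Sum>k<L. hh u T k) = L + Phi u B T"
proof -
  have hB: "\<forall>k<L. hh u T k \<le> B"
    using assms(4,5) by (auto simp: hh_le_iff[OF assms(2)])
  have "(\<Sum>k<L. hh u T k) = (\<Sum>l\<in>{1..B}. card {k. k < L \<and> l \<le> hh u T k})"
    by (rule sum_levels[OF hB])
  also have "{1..B} = insert 1 {2..B}" using assms(5) by auto
  also have "(\<Sum>l\<in>insert 1 {2..B}. card {k. k < L \<and> l \<le> hh u T k})
      = card {k. k < L \<and> 1 \<le> hh u T k} + (\<Sum>l\<in>{2..B}. card {k. k < L \<and> l \<le> hh u T k})"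
    by simp
  also have "{k. k < L \<and> 1 \<le> hh u T k} = {..<L}" using le_hh_iff[OF assms(2)] by auto
  also have "(\<Sum>l\<in>{2..B}. card {k. k < L \<and> l \<le> hh u T k}) = Phi u B T"
    unfolding Phi_def using level_set[OF assms(1-3)] by (intro sum.cong) auto
  finally show ?thesis by simp
qed



definition NN :: "nat list \<Rightarrow> nat \<Rightarrow> nat \<Rightarrow> nat list set" where
  "NN u L m = {w. pword w \<and> gfo u w \<and> length w = L \<and> sum_list w = m}"

lemma NN_union: "NN u L m = (\<Union>i\<in>{i. i + length u \<le> L}. AA u L m i)"
  unfolding NN_def AA_def gfo_def by auto

lemma AA_finite: "finite (AA u L m i)"
  by (rule finite_subset[OF _ fin_lists[of L m]]) (auto simp: AA_def)

lemma IE: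
  assumes "inc_dec u" "\<forall>a\<in>set u. a \<le> B" "1 \<le> B"
  shows "int (card (NN u L m)) =
    (\<Sum>T | T \<subseteq> {i. i + length u \<le> L} \<and> T \<noteq> {}. (-1)^(card T + 1) * int (Kt L m (L + Phi u B T)))"
proof -
  interpret Incl_Excl finite "int o card"
    by unfold_locales (auto simp add: card_Un_disjnt)
  let ?I = "{i. i + length u \<le> L}"
  have finI: "finite ?I" by (rule finite_subset[of _ "{..L}"]) auto
  have "(int o card) (\<Union>(AA u L m ` ?I)) =
      (\<Sum>T | T \<subseteq> ?I \<and> T \<noteq> {}. (- 1) ^ (card T + 1) * (int o card) (\<Inter>(AA u L m ` T)))"
    by (rule restricted_indexed[OF finI]) (rule AA_finite)
  also have "\<dots> = (\<Sum>T | T \<subseteq> ?I \<and> T \<noteq> {}. (-1)^(card T + 1) * int (Kt L m (L + Phi u B T)))"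
  proof (rule sum.cong[OF refl])
    fix T assume T: "T \<in> {T. T \<subseteq> ?I \<and> T \<noteq> {}}"
    then have fT: "finite T" using finI finite_subset by blast
    have Tb: "\<forall>i\<in>T. i + length u \<le> L" using T by auto
    have "\<Inter>(AA u L m ` T) = {w. length w = L \<and> sum_list w = m \<and> (\<forall>k<L. hh u T k \<le> w!k)}"
      using inter_AA[OF fT _ Tb] T by auto
    then have "card (\<Inter>(AA u L m ` T)) = Kt L m (\<Sum>k<L. hh u T k)" by (simp add: count_above)
    also have "(\<Sum>k<L. hh u T k) = L + Phi u B T" by (rule wt_formula[OF assms(1) fT Tb assms(2,3)])
    finally show "(- 1) ^ (card T + 1) * (int o card) (\<Inter>(AA u L m ` T)) =
        (-1)^(card T + 1) * int (Kt L m (L + Phi u B T))" by simp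
  qed
  finally show ?thesis using NN_union by simp
qed



lemma F_nth: "fps_nth (fps_nth (F u) L) m = int (card (NN u L m))"
  by (simp add: F_def NN_def)

lemma cnt_filter: "cnt u l = length (filter (\<lambda>x. l \<le> x) u)"
  by (simp add: cnt_def length_filter_conv_card)

lemma cnt_mset: "mset u = mset v \<Longrightarrow> cnt u l = cnt v l"
  unfolding cnt_filter by (metis mset_filter size_mset)

lemma filter_split: "length (filter (\<lambda>x. a \<le> x) u) = length (filter ((=) a) u) + length (filter (\<lambda>x. Suc a \<le> x) u)"
  by (induction u) auto

lemma mset_cnt: "(\<And>l. cnt u l = cnt v l) \<Longrightarrow> mset u = mset v"
proof (rule multiset_eqI)
  fix a assume "\<And>l. cnt u l = cnt v l"
  then have "length (filter (\<lambda>x. a \<le> x) u) = length (filter (\<lambda>x. a \<le> x) v)"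
    "length (filter (\<lambda>x. Suc a \<le> x) u) = length (filter (\<lambda>x. Suc a \<le> x) v)"
    by (simp_all add: cnt_filter)
  then have "length (filter ((=) a) u) = length (filter ((=) a) v)"
    using filter_split[of a u] filter_split[of a v] by simp
  moreover have "\<And>w. count (mset w) a = length (filter ((=) a) w)"
    subgoal for w by (induction w) auto done
  ultimately show "count (mset u) a = count (mset v) a" by simp
qed

lemma cnt_anti: "l \<le> l' \<Longrightarrow> cnt u l' \<le> cnt u l"
  unfolding cnt_def by (rule card_mono) auto

lemma cnt_low: "pword u \<Longrightarrow> l \<le> 1 \<Longrightarrow> cnt u l = length u"
proof -
  assume "pword u" "l \<le> 1"
  then have "{j. j < length u \<and> l \<le> u!j} = {..<length u}"
  proof (intro set_eqI iffI)
    fix j assume "j \<in> {..<length u}"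
    then have "0 < u!j" using \<open>pword u\<close> unfolding pword_def by auto
    then show "j \<in> {j. j < length u \<and> l \<le> u!j}" using \<open>l \<le> 1\<close> \<open>j \<in> {..<length u}\<close> by auto
  qed auto
  then show ?thesis by (simp add: cnt_def)
qed

lemma cnt_high: "\<forall>a\<in>set u. a \<le> B \<Longrightarrow> B < l \<Longrightarrow> cnt u l = 0"
proof -
  assume "\<forall>a\<in>set u. a \<le> B" "B < l"
  then have "{j. j < length u \<and> l \<le> u!j} = {}" by (auto dest!: nth_mem)
  then show ?thesis by (simp add: cnt_def)
qed

definition Psi :: "nat list \<Rightarrow> nat \<Rightarrow> nat \<Rightarrow> nat" where
  "Psi u B g = (\<Sum>l\<in>{2..B}. min g (cnt u l))"

lemma Phi_insert:
  assumes "finite T" "T \<noteq> {}" "\<forall>x\<in>T. x < t"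
  shows "Phi u B (insert t T) = Phi u B T + Psi u B (t - Max T)"
  unfolding Phi_def Psi_def G_insert[OF assms] by (simp add: sum.distrib)

lemma Phi_single: "Phi u B {t} = Phi u B {0}"
  unfolding Phi_def by (simp add: G_single)

lemma Phi_pair: "0 < g \<Longrightarrow> Phi u B {0, g} = Phi u B {0} + Psi u B g"
  using Phi_insert[of "{0}" g u B] by (simp add: insert_commute)

lemma Psi_Suc: "Psi u B (Suc g) = Psi u B g + card ({2..B} \<inter> {l. Suc g \<le> cnt u l})"
proof -
  have "Psi u B (Suc g) = (\<Sum>l\<in>{2..B}. min g (cnt u l) + of_bool (Suc g \<le> cnt u l))"
    unfolding Psi_def by (intro sum.cong) auto
  then show ?thesis by (simp add: sum.distrib Psi_def)
qed

definition Pg :: "nat \<Rightarrow> nat set \<Rightarrow> bool" where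
  "Pg d T \<longleftrightarrow> (\<forall>t\<in>T. t \<noteq> Min T \<longrightarrow> (\<exists>s\<in>T. s < t \<and> t - s < d))"

lemma others:
  assumes IH: "\<And>d'. d' < d \<Longrightarrow> Phi u B {0,d'} = Phi v B {0,d'}" and d: "0 < d"
  shows "finite T \<Longrightarrow> T \<noteq> {} \<Longrightarrow> Pg d T \<Longrightarrow> Phi u B T = Phi v B T"
proof (induction T rule: finite_linorder_max_induct)
  case empty then show ?case by simp
next
  case (insert b A)
  show ?case
  proof (cases "A = {}")
    case True
    then show ?thesis using IH[OF d] by (simp add: Phi_single[of u B b] Phi_single[of v B b])
  next
    case False
    have mA: "Min A \<in> A" "Max A \<in> A" using False insert by auto
    have "Min A < b" using insert(2) mA by auto
    then have minI: "Min (insert b A) = Min A" by (simp add: Min_insert[OF insert(1) False] min_def)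
    have PA: "Pg d A" unfolding Pg_def
    proof (intro ballI impI)
      fix t assume t: "t \<in> A" "t \<noteq> Min A"
      have H: "\<forall>t\<in>insert b A. t \<noteq> Min (insert b A) \<longrightarrow> (\<exists>s\<in>insert b A. s < t \<and> t - s < d)"
        using insert(5) by (simp only: Pg_def)
      have "t \<in> insert b A" "t \<noteq> Min (insert b A)" using t minI by auto
      then have "\<exists>s\<in>insert b A. s < t \<and> t - s < d" using H by blast
      then obtain s where s: "s \<in> insert b A" "s < t" "t - s < d" by blast
      then have "s \<in> A" using insert(2) t by auto
      then show "\<exists>s\<in>A. s < t \<and> t - s < d" using s by auto
    qed
    have "b \<noteq> Min (insert b A)" using minI mA insert(2) by auto
    moreover have H: "\<forall>t\<in>insert b A. t \<noteq> Min (insert b A) \<longrightarrow> (\<exists>s\<in>insert b A. s < t \<and> t - s < d)"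
      using insert(5) by (simp only: Pg_def)
    ultimately have "\<exists>s\<in>insert b A. s < b \<and> b - s < d" by blast
    then obtain s where s: "s \<in> insert b A" "s < b" "b - s < d" by blast
    then have "s \<in> A" by auto
    then have "s \<le> Max A" using insert(1) by simp
    then have g: "b - Max A < d" "0 < b - Max A" using s mA insert(2) by auto
    have psi: "Psi u B g = Psi v B g" if "0 < g" "g < d" for g
    proof -
      have "Phi u B {0, g} = Phi u B {0} + Psi u B g" "Phi v B {0, g} = Phi v B {0} + Psi v B g"
        using Phi_pair[OF that(1)] by auto
      moreover have "Phi u B {0, g} = Phi v B {0, g}" using IH that(2) .
      moreover have "Phi u B {0, 0} = Phi v B {0, 0}" using IH d .
      ultimately show ?thesis by simp
    qed
    have e1: "Phi u B (insert b A) = Phi u B A + Psi u B (b - Max A)"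
      by (rule Phi_insert[OF insert(1) False insert(2)])
    have e2: "Phi v B (insert b A) = Phi v B A + Psi v B (b - Max A)"
      by (rule Phi_insert[OF insert(1) False insert(2)])
    have e3: "Phi u B A = Phi v B A" using insert(3) False PA by blast
    show ?thesis using e1 e2 e3 psi[OF g(2) g(1)] by simp
  qed
qed

lemma Pg_sub:
  assumes "T \<subseteq> {0..d}" "T \<noteq> {}" "T \<noteq> {0,d}"
  shows "Pg d T"
  unfolding Pg_def
proof (intro ballI impI)
  fix t assume t: "t \<in> T" "t \<noteq> Min T"
  have fT: "finite T" using assms(1) finite_subset by blast
  have mT: "Min T \<in> T" "Min T \<le> t" using fT assms(2) t by auto
  then have lt: "Min T < t" using t by auto
  show "\<exists>s\<in>T. s < t \<and> t - s < d"
  proof (cases "t - Min T < d")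
    case True then show ?thesis using mT lt by blast
  next
    case False
    have "t \<le> d" using assms(1) t by auto
    then have td: "t = d" "Min T = 0" using False lt by auto
    then have "0 \<in> T" "d \<in> T" using mT t by auto
    then obtain z where z: "z \<in> T" "z \<noteq> 0" "z \<noteq> d" using assms(3) assms(1) by blast
    then have "z < d" using assms(1) by fastforce
    then show ?thesis using z td by auto
  qed
qed



lemma NN_finite: "finite (NN u L m)"
  by (rule finite_subset[OF _ fin_lists[of L m]]) (auto simp: NN_def)

lemma NN_short: "L < length u \<Longrightarrow> NN u L m = {}"
  unfolding NN_def gfo_def by auto

lemma NN_self: "pword u \<Longrightarrow> u \<in> NN u (length u) (sum_list u)"
  unfolding NN_def gfo_def by (auto intro: exI[of _ 0])

lemma wilf_iff: "wilf_equiv u v \<longleftrightarrow> (\<forall>L m. card (NN u L m) = card (NN v L m))"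
proof
  assume "wilf_equiv u v"
  then have "F u = F v" by (simp add: wilf_equiv_def)
  then show "\<forall>L m. card (NN u L m) = card (NN v L m)" by (metis F_nth of_nat_eq_iff)
next
  assume A: "\<forall>L m. card (NN u L m) = card (NN v L m)"
  have "F u = F v"
  proof (rule fps_ext)
    fix L show "fps_nth (F u) L = fps_nth (F v) L"
      by (rule fps_ext) (simp add: F_nth A)
  qed
  then show "wilf_equiv u v" by (simp add: wilf_equiv_def)
qed

lemma length_eq:
  assumes "pword u" "pword v" "wilf_equiv u v"
  shows "length u = length v"
proof (rule ccontr)
  have C: "\<And>L m. card (NN u L m) = card (NN v L m)" using assms(3) wilf_iff by blast
  have pos: "\<And>w. pword w \<Longrightarrow> card (NN w (length w) (sum_list w)) > 0"
    using NN_self NN_finite by (metis card_gt_0_iff empty_iff)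
  assume "length u \<noteq> length v"
  then consider "length u < length v" | "length v < length u" by linarith
  then show False
  proof cases
    case 1 then show False using pos[OF assms(1)] C NN_short[OF 1] by (metis card.empty less_irrefl)
  next
    case 2 then show False using pos[OF assms(2)] C NN_short[OF 2] by (metis card.empty less_irrefl)
  qed
qed

lemma cnt_cmp:
  assumes C: "\<And>g. card ({2..B} \<inter> {l. Suc g \<le> cnt u l}) = card ({2..B} \<inter> {l. Suc g \<le> cnt v l})"
    and l0: "2 \<le> l0" "l0 \<le> B"
  shows "\<not> cnt u l0 < cnt v l0"
proof
  assume lt: "cnt u l0 < cnt v l0"
  define g where "g = cnt v l0 - 1"
  have g: "Suc g = cnt v l0" using lt g_def by simp
  have s1: "{2..B} \<inter> {l. Suc g \<le> cnt u l} \<subseteq> {2..<l0}"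
  proof
    fix l assume l: "l \<in> {2..B} \<inter> {l. Suc g \<le> cnt u l}"
    have "l < l0"
    proof (rule ccontr)
      assume "\<not> l < l0"
      then have "cnt u l \<le> cnt u l0" by (intro cnt_anti) simp
      then show False using l lt g by simp
    qed
    then show "l \<in> {2..<l0}" using l by simp
  qed
  have s2: "{2..l0} \<subseteq> {2..B} \<inter> {l. Suc g \<le> cnt v l}"
  proof
    fix l assume l: "l \<in> {2..l0}"
    then have "cnt v l0 \<le> cnt v l" by (intro cnt_anti) simp
    then show "l \<in> {2..B} \<inter> {l. Suc g \<le> cnt v l}" using l l0 g by simp
  qed
  have "card ({2..B} \<inter> {l. Suc g \<le> cnt u l}) \<le> card {2..<l0::nat}" by (rule card_mono[OF _ s1]) simp
  moreover have "card {2..l0::nat} \<le> card ({2..B} \<inter> {l. Suc g \<le> cnt v l})" by (rule card_mono[OF _ s2]) simp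
  ultimately show False using C[of g] l0 by simp
qed



theorem theorem4:
  fixes u v :: "nat list"
  assumes "pword u" and "pword v"
    and "inc_dec u" and "inc_dec v"
  shows "wilf_equiv u v \<longleftrightarrow> rearrangement u v"
proof -
  define B where "B = sum_list u + sum_list v + 1"
  have Bu: "\<forall>a\<in>set u. a \<le> B" using member_le_sum_list unfolding B_def by fastforce
  have Bv: "\<forall>a\<in>set v. a \<le> B" using member_le_sum_list unfolding B_def by fastforce
  have B1: "1 \<le> B" unfolding B_def by simp
  note IEu = IE[OF assms(3) Bu B1] and IEv = IE[OF assms(4) Bv B1]
  show ?thesis
  proof
    assume R: "rearrangement u v"
    then have M: "mset u = mset v" by (simp add: rearrangement_def)
    then have len: "length u = length v" by (rule mset_eq_length)
    have "\<And>T. Phi u B T = Phi v B T" unfolding Phi_def using cnt_mset[OF M] by simp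
    then have "\<And>L m. int (card (NN u L m)) = int (card (NN v L m))"
      using IEu IEv len by simp
    then show "wilf_equiv u v" unfolding wilf_iff by simp
  next
    assume W: "wilf_equiv u v"
    have len: "length u = length v" by (rule length_eq[OF assms(1,2) W])
    define n where "n = length u"
    have C: "\<And>L m. int (card (NN u L m)) = int (card (NN v L m))" using W wilf_iff by simp
    have pair: "Phi u B {0,d} = Phi v B {0,d}" for d
    proof (induction d rule: less_induct)
      case (less d)
      define L where "L = n + d"
      define TT where "TT = {T. T \<subseteq> {i. i + n \<le> L} \<and> T \<noteq> {}}"
      define T0 where "T0 = {0::nat, d}"
      have I: "{i. i + n \<le> L} = {0..d}" unfolding L_def by auto
      have finTT: "finite TT" unfolding TT_def I by (rule finite_subset[of _ "Pow {0..d}"]) auto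
      have T0in: "T0 \<in> TT" unfolding TT_def T0_def I by auto
      define f where "f w T m = (-1::int)^(card T + 1) * int (Kt L m (L + Phi w B T))" for w T m
      have rest: "(\<Sum>T\<in>TT - {T0}. f u T m) = (\<Sum>T\<in>TT - {T0}. f v T m)" for m
      proof (rule sum.cong[OF refl])
        fix T assume T: "T \<in> TT - {T0}"
        then have Ts: "T \<subseteq> {0..d}" "T \<noteq> {}" "T \<noteq> {0,d}" unfolding TT_def T0_def I by auto
        have fT: "finite T" using Ts(1) finite_subset by blast
        have d0: "0 < d"
        proof (rule ccontr)
          assume "\<not> 0 < d"
          then have "d = 0" by simp
          then have "T = {0}" using Ts by auto
          then show False using Ts(3) \<open>d = 0\<close> by simp
        qed
        have "Phi u B T = Phi v B T"
          by (rule others[OF _ d0 fT Ts(2) Pg_sub[OF Ts]]) (rule less)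
        then show "f u T m = f v T m" by (simp add: f_def)
      qed
      have "Kt L m (L + Phi u B T0) = Kt L m (L + Phi v B T0)" for m
      proof -
        have "(\<Sum>T\<in>TT. f u T m) = (\<Sum>T\<in>TT. f v T m)"
          using C[of L m] IEu[of L m] IEv[of L m] len unfolding f_def TT_def n_def by simp
        then have "f u T0 m + (\<Sum>T\<in>TT - {T0}. f u T m) = f v T0 m + (\<Sum>T\<in>TT - {T0}. f v T m)"
          using sum.remove[OF finTT T0in] by metis
        then have "f u T0 m = f v T0 m" using rest[of m] by simp
        then show ?thesis by (simp add: f_def)
      qed
      then have "L + Phi u B T0 = L + Phi v B T0" by (rule Kt_inj)
      then show ?case by (simp add: T0_def)
    qed
    have psi: "Psi u B g = Psi v B g" for g
    proof (cases "g = 0")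
      case True then show ?thesis by (simp add: Psi_def)
    next
      case False
      then have "0 < g" by simp
      then show ?thesis using Phi_pair[of g u B] Phi_pair[of g v B] pair[of g] pair[of 0] by simp
    qed
    have cards: "card ({2..B} \<inter> {l. Suc g \<le> cnt u l}) = card ({2..B} \<inter> {l. Suc g \<le> cnt v l})" for g
      using Psi_Suc[of u B g] Psi_Suc[of v B g] psi[of g] psi[of "Suc g"] by simp
    have cards': "card ({2..B} \<inter> {l. Suc g \<le> cnt v l}) = card ({2..B} \<inter> {l. Suc g \<le> cnt u l})" for g
      using cards[of g] by simp
    have "cnt u l = cnt v l" for l
    proof -
      consider "l \<le> 1" | "2 \<le> l" "l \<le> B" | "B < l" by linarith
      then show ?thesis
      proof cases
        case 1 then show ?thesis using cnt_low[OF assms(1)] cnt_low[OF assms(2)] len by simp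
      next
        case 2 then show ?thesis using cnt_cmp[OF cards 2] cnt_cmp[OF cards' 2] by simp
      next
        case 3 then show ?thesis using cnt_high[OF Bu] cnt_high[OF Bv] by simp
      qed
    qed
    then show "rearrangement u v" unfolding rearrangement_def by (rule mset_cnt)
  qed
qed


end
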